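(* Let $(X,d)$ be a separable metric space, $T\colon X\to X$ a Borel measurable map, $(s_n)_{n\ge1}$ a scale sequence, and $\mu,\nu$ Borel probability measures on $X$ (not necessarily $T$-invariant). Assume $\nu$ is decisive. Then $\phi(x,y)=\liminf_{n\to\infty}s_n\,d(T^nx,y)$ satisfies $\phi(x,y)\in\{0,\infty\}$ for $\mu\times\nu$-almost every $(x,y)$.
   Context: A scale sequence is a sequence of positive reals $s_n$ with $s_n\to\infty$. A Borel probability measure $\nu$ on $(X,d)$ is decisive if for every sequence $(x_n)$ in $X$ and every scale sequence $(s_n)$, the function $\omega(x)=\liminf_n s_n d(x_n,x)$ lies in $\{0,\infty\}$ for $\nu$-a.e. $x$. *)

theory Defs
  imports "HOL-Probability.Probability"
begin

definition scale_seq :: "(nat \<Rightarrow> real) \<Rightarrow> bool" where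
  "scale_seq s \<longleftrightarrow> (\<forall>n. 0 < s n) \<and> filterlim s at_top sequentially"

definition decisive :: "'a::metric_space measure \<Rightarrow> bool" where
  "decisive \<nu> \<longleftrightarrow>
     (\<forall>xs :: nat \<Rightarrow> 'a. \<forall>s. scale_seq s \<longrightarrow>
        (AE x in \<nu>. liminf (\<lambda>n. ereal (s n * dist (xs n) x)) \<in> {0, \<infinity>}))"

end

theory Submission
  imports Defs
begin

theorem theorem5p3:
  fixes T :: "'a::{metric_space, second_countable_topology} \<Rightarrow> 'a"
    and s :: "nat \<Rightarrow> real"
    and \<mu> \<nu> :: "'a measure"
  assumes "T \<in> borel_measurable borel"
    and "scale_seq s"
    and "prob_space \<mu>" and "sets \<mu> = sets borel"
    and "prob_space \<nu>" and "sets \<nu> = sets borel"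
    and "decisive \<nu>"
  shows "AE z in \<mu> \<Otimes>\<^sub>M \<nu>.
           liminf (\<lambda>n. ereal (s n * dist ((T ^^ n) (fst z)) (snd z))) \<in> {0, \<infinity>}"
proof -
  interpret pair_prob_space \<mu> \<nu>
    using assms(3,5) by (simp add: pair_prob_space_def pair_sigma_finite_def prob_space_imp_sigma_finite)
  let ?f = "\<lambda>z. liminf (\<lambda>n. ereal (s n * dist ((T ^^ n) (fst z)) (snd z)))"
  have Tn: "\<And>n. (T ^^ n) \<in> borel_measurable borel"
    by (rule measurable_compose_n) (use assms(1) in simp)
  have mb: "?f \<in> borel_measurable (borel \<Otimes>\<^sub>M (borel::'a measure))"
  proof (rule borel_measurable_liminf)
    fix n
    have "(\<lambda>z. (T ^^ n) (fst z)) \<in> borel_measurable (borel \<Otimes>\<^sub>M (borel::'a measure))"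
      using measurable_compose[OF measurable_fst[of borel "borel::'a measure"] Tn[of n]] unfolding comp_def by assumption
    moreover have "(\<lambda>z. snd z) \<in> borel_measurable (borel \<Otimes>\<^sub>M (borel::'a measure))"
      using measurable_snd by simp
    ultimately have "(\<lambda>z. dist ((T ^^ n) (fst z)) (snd z)) \<in> borel_measurable (borel \<Otimes>\<^sub>M (borel::'a measure))"
      by (rule borel_measurable_dist)
    then show "(\<lambda>z. ereal (s n * dist ((T ^^ n) (fst z)) (snd z))) \<in> borel_measurable (borel \<Otimes>\<^sub>M (borel::'a measure))"
      by measurable
  qed
  have sp: "sets (\<mu> \<Otimes>\<^sub>M \<nu>) = sets (borel \<Otimes>\<^sub>M (borel::'a measure))"
    by (rule sets_pair_measure_cong) (use assms(4,6) in auto)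
  have mb2: "?f \<in> borel_measurable (\<mu> \<Otimes>\<^sub>M \<nu>)"
    using mb measurable_cong_sets[OF sp refl] by blast
  have "{z \<in> space (\<mu> \<Otimes>\<^sub>M \<nu>). ?f z \<in> {0, \<infinity>}} \<in> sets (\<mu> \<Otimes>\<^sub>M \<nu>)"
    using measurable_sets[OF mb2, of "{0, \<infinity>}"] by (simp add: vimage_def Int_def conj_commute)
  moreover have "AE x in \<mu>. AE y in \<nu>. ?f (x, y) \<in> {0, \<infinity>}"
  proof (rule AE_I2)
    fix x
    show "AE y in \<nu>. ?f (x, y) \<in> {0, \<infinity>}"
      using assms(7,2) unfolding decisive_def
      by (auto dest!: spec[of _ "\<lambda>n. (T ^^ n) x"] spec[of _ s])
  qed
  ultimately show ?thesis by (rule AE_pair_measure)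
qed

end
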